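(* Let $N$ be the number of experts, $T$ the time horizon, and run EXP4.AT with learning rate $\eta=\sqrt{\frac{\ln N}{2T}}$. Then for any sequence of true labels $y_1,\dots,y_T\in\{0,1\}$ and expert advice $(\mathcal{E}^i_t)$, the predictions $\hat y_1,\dots,\hat y_T$ output by EXP4.AT satisfy $$\mathbb{E}\Bigl[\sum_{t=1}^T\mathbb{1}\{\hat y_t\ne y_t\}\Bigr] \le \inf_{j\in[N]}\sum_{t=1}^T\mathbb{1}\{\mathcal{E}^j_t\ne y_t\} + 3\sqrt{T\ln N}.$$
   Context: Binary prediction with expert advice under apple tasting feedback, where the labels and advice are fixed in advance (not depending on the algorithm's randomness). EXP4.AT with learning rate $\eta\in(0,\tfrac12)$: let $q_1$ be uniform on $[N]$. In each round $t=1,\dots,T$: receive advice $\mathcal{E}^1_t,\dots,\mathcal{E}^N_t\in\{0,1\}$; set $p_t^1=(1-\eta)\sum_{i=1}^N q_t^i\mathcal{E}^i_t+\eta$ and $p_t^0=1-p_t^1$; predict $\hat y_t=1$ with probability $p_t^1$ and $\hat y_t=0$ otherwise; the true label $y_t$ is observed only if $\hat y_t=1$; define $\hat\ell_t(y)=\mathbb{1}\{y\ne y_t\}\mathbb{1}\{\hat y_t=1\}/p_t^1$ for $y\in\{0,1\}$; update $q_{t+1}^i=\frac{q_t^i\exp(-\eta\hat\ell_t(\mathcal{E}^i_t))}{\sum_{j=1}^N q_t^j\exp(-\eta\hat\ell_t(\mathcal{E}^j_t))}$. The expectation is over the algorithm's randomness. *)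

theory Defs
  imports "HOL-Probability.Probability"
begin

text \<open>Binary labels/advice {0,1} are encoded as bool (True = 1).
  Experts are indexed by {..<N}; rounds by 1..T.
  E t i is the advice of expert i in round t; y t is the true label in round t.\<close>

definition indic :: "bool \<Rightarrow> real" where
  "indic b = (if b then 1 else 0)"

definition exp4_p1 :: "real \<Rightarrow> nat \<Rightarrow> (nat \<Rightarrow> nat \<Rightarrow> bool) \<Rightarrow> nat \<Rightarrow> (nat \<Rightarrow> real) \<Rightarrow> real" where
  "exp4_p1 \<eta> N E t q = (1 - \<eta>) * (\<Sum>i<N. q i * indic (E t i)) + \<eta>"

definition exp4_lhat :: "real \<Rightarrow> nat \<Rightarrow> (nat \<Rightarrow> nat \<Rightarrow> bool) \<Rightarrow> (nat \<Rightarrow> bool) \<Rightarrow> nat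
    \<Rightarrow> (nat \<Rightarrow> real) \<Rightarrow> bool \<Rightarrow> bool \<Rightarrow> real" where
  "exp4_lhat \<eta> N E y t q yh v = indic (v \<noteq> y t) * indic yh / exp4_p1 \<eta> N E t q"

definition exp4_update :: "real \<Rightarrow> nat \<Rightarrow> (nat \<Rightarrow> nat \<Rightarrow> bool) \<Rightarrow> (nat \<Rightarrow> bool) \<Rightarrow> nat
    \<Rightarrow> (nat \<Rightarrow> real) \<Rightarrow> bool \<Rightarrow> (nat \<Rightarrow> real)" where
  "exp4_update \<eta> N E y t q yh =
     (\<lambda>i. q i * exp (- \<eta> * exp4_lhat \<eta> N E y t q yh (E t i)) /
          (\<Sum>j<N. q j * exp (- \<eta> * exp4_lhat \<eta> N E y t q yh (E t j))))"

text \<open>exp4_run \<eta> N E y k t q: distribution of the number of mistakes made in the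
  k rounds t, t+1, ..., t+k-1, when the weight vector at round t is q.\<close>
primrec exp4_run :: "real \<Rightarrow> nat \<Rightarrow> (nat \<Rightarrow> nat \<Rightarrow> bool) \<Rightarrow> (nat \<Rightarrow> bool) \<Rightarrow> nat \<Rightarrow> nat
    \<Rightarrow> (nat \<Rightarrow> real) \<Rightarrow> nat pmf" where
  "exp4_run \<eta> N E y 0 t q = return_pmf 0"
| "exp4_run \<eta> N E y (Suc k) t q =
     bind_pmf (bernoulli_pmf (exp4_p1 \<eta> N E t q)) (\<lambda>yh.
       map_pmf (\<lambda>m. (if yh \<noteq> y t then 1 else 0) + m)
         (exp4_run \<eta> N E y k (Suc t) (exp4_update \<eta> N E y t q yh)))"

definition exp4_mistakes :: "real \<Rightarrow> nat \<Rightarrow> nat \<Rightarrow> (nat \<Rightarrow> nat \<Rightarrow> bool) \<Rightarrow> (nat \<Rightarrow> bool) \<Rightarrow> nat pmf" where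
  "exp4_mistakes \<eta> N T E y = exp4_run \<eta> N E y T 1 (\<lambda>i. 1 / real N)"

end

theory Submission
  imports Defs
begin

lemma exp_neg_bound:
  fixes x :: real assumes "0 \<le> x" shows "exp (-x) \<le> 1 - x + x^2"
proof -
  have "1 + x \<le> exp x" by simp
  have pos: "0 < 1 + x" using assms by simp
  have "exp (-x) = 1 / exp x" by (simp add: exp_minus inverse_eq_divide)
  also have "\<dots> \<le> 1 / (1 + x)" using \<open>1 + x \<le> exp x\<close> pos by (simp add: frac_le)
  also have "\<dots> \<le> 1 - x + x^2"
  proof -
    have "1 \<le> (1 - x + x^2) * (1 + x)" using assms by (simp add: algebra_simps power2_eq_square power3_eq_cube)
    then show ?thesis using pos by (simp add: divide_le_eq)
  qed
  finally show ?thesis .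
qed

lemma roundT:
  fixes \<eta> a p :: real
  assumes "0 < \<eta>" "\<eta> < 1/2" "0 \<le> a" "a \<le> 1" "p = (1-\<eta>)*a + \<eta>"
  shows "(1-p) + p * ln (a + (1-a) * exp (-\<eta>/p)) / \<eta> \<le> 2*\<eta>"
proof -
  define x where "x = \<eta>/p"
  have h1: "0 \<le> (1-\<eta>)*a" "0 \<le> \<eta>*(1-a)" using assms(1-4) by simp_all
  have h2: "p - \<eta> = (1-\<eta>)*a" "p - a = \<eta>*(1-a)" by (simp_all add: assms(5) algebra_simps)
  have pge1: "\<eta> \<le> p" using h1(1) h2(1) by linarith
  have pge2: "a \<le> p" using h1(2) h2(2) by linarith
  note pge = pge1 pge2
  have ppos: "0 < p" using pge assms(1-4) by linarith
  have x0: "0 < x" "x \<le> 1" using ppos pge assms(1) by (auto simp: x_def)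
  define W where "W = a * exp x + (1 - a)"
  have "a * 1 \<le> a * exp x" using x0 assms(3) by (intro mult_left_mono) auto
  then have W1: "1 \<le> W" by (simp add: W_def)
  have ee: "exp (-x) * exp x = 1" by (simp flip: exp_add)
  have "exp (-x) * W = a * (exp (-x) * exp x) + (1-a) * exp (-x)" by (simp add: W_def algebra_simps)
  then have Zeq: "a + (1-a) * exp (-\<eta>/p) = exp (-x) * W" using ee by (simp add: x_def)
  have "ln (a + (1-a) * exp (-\<eta>/p)) = ln (exp (-x) * W)"
    by (simp only: Zeq)
  also have "\<dots> = -x + ln W" using W1 by (simp add: ln_mult)
  also have "ln W \<le> W - 1" using W1 by (intro ln_le_minus_one) simp
  also have "W - 1 = a * (exp x - 1)" by (simp add: W_def algebra_simps)
  also have "\<dots> \<le> a * (x + x^2)" using exp_bound[of x] x0 assms(1-4) by (intro mult_left_mono) auto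
  finally have L: "ln (a + (1-a) * exp (-\<eta>/p)) \<le> -x + a * (x + x^2)" by simp
  have "p * ln (a + (1-a) * exp (-\<eta>/p)) / \<eta> \<le> p * (-x + a * (x + x^2)) / \<eta>"
    using L ppos assms(1-4) by (intro divide_right_mono mult_left_mono) auto
  also have "\<dots> = -1 + a + a * x" using ppos assms(1-4) by (simp add: x_def field_simps power2_eq_square)
  finally have A: "p * ln (a + (1-a) * exp (-\<eta>/p)) / \<eta> \<le> -1 + a + a * x" .
  have "a * x \<le> \<eta>" using pge ppos assms(1-4) by (simp add: x_def field_simps mult_right_mono)
  then show ?thesis using A h1 h2 assms(1) by linarith
qed

lemma roundF:
  fixes \<eta> a p :: real
  assumes "0 < \<eta>" "\<eta> < 1/2" "0 \<le> a" "a \<le> 1" "p = (1-\<eta>)*a + \<eta>"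
  shows "p + p * ln (a * exp (-\<eta>/p) + (1-a)) / \<eta> \<le> 2*\<eta>"
proof -
  define x where "x = \<eta>/p"
  have h1: "0 \<le> (1-\<eta>)*a" "0 \<le> \<eta>*(1-a)" using assms(1-4) by simp_all
  have h2: "p - \<eta> = (1-\<eta>)*a" "p - a = \<eta>*(1-a)" by (simp_all add: assms(5) algebra_simps)
  have pge1: "\<eta> \<le> p" using h1(1) h2(1) by linarith
  have pge2: "a \<le> p" using h1(2) h2(2) by linarith
  note pge = pge1 pge2
  have ppos: "0 < p" using pge assms(1-4) by linarith
  have x0: "0 < x" "x \<le> 1" using ppos pge assms(1) by (auto simp: x_def)
  define Z where "Z = a * exp (-x) + (1 - a)"
  have "exp (-x) \<le> 1" using x0 by simp
  then have "0 \<le> (1-a)*(1 - exp (-x))" using assms(4) by simp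
  moreover have "Z - exp (-x) = (1-a)*(1 - exp (-x))" by (simp add: Z_def algebra_simps)
  ultimately have "exp (-x) \<le> Z" by linarith
  then have Zpos: "0 < Z" by (smt (verit) exp_gt_zero)
  have Zeq: "a * exp (-\<eta>/p) + (1-a) = Z" by (simp add: Z_def x_def)
  have "ln Z \<le> Z - 1" using Zpos by (intro ln_le_minus_one)
  also have "Z - 1 = a * (exp (-x) - 1)" by (simp add: Z_def algebra_simps)
  also have "\<dots> \<le> a * (-x + x^2)" using exp_neg_bound[of x] x0 assms(1-4) by (intro mult_left_mono) auto
  finally have L: "ln Z \<le> a * (-x + x^2)" .
  have "p * ln Z / \<eta> \<le> p * (a * (-x + x^2)) / \<eta>"
    using L ppos assms(1-4) by (intro divide_right_mono mult_left_mono) auto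
  also have "\<dots> = -a + a * x" using ppos assms(1-4) by (simp add: x_def field_simps power2_eq_square)
  finally have A: "p * ln Z / \<eta> \<le> -a + a * x" .
  have "a * x \<le> \<eta>" using pge ppos assms(1-4) by (simp add: x_def field_simps mult_right_mono)
  moreover have "0 \<le> \<eta>*a" using assms(1,3) by simp
  moreover have "\<eta>*(1-a) = \<eta> - \<eta>*a" by (simp add: algebra_simps)
  ultimately show ?thesis unfolding Zeq using A h1 h2 assms(1) by linarith
qed

definition probv :: "nat \<Rightarrow> (nat \<Rightarrow> real) \<Rightarrow> bool" where
  "probv N q \<longleftrightarrow> (\<forall>i<N. 0 < q i) \<and> (\<Sum>i<N. q i) = 1"

definition avote :: "nat \<Rightarrow> (nat \<Rightarrow> nat \<Rightarrow> bool) \<Rightarrow> nat \<Rightarrow> (nat \<Rightarrow> real) \<Rightarrow> real" where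
  "avote N E t q = (\<Sum>i<N. q i * indic (E t i))"

lemma indic_simps [simp]: "indic True = 1" "indic False = 0"
  by (simp_all add: indic_def)

lemma indic_bounds: "0 \<le> indic b" "indic b \<le> 1"
  by (simp_all add: indic_def)

lemma avote_bounds:
  assumes "probv N q" shows "0 \<le> avote N E t q" "avote N E t q \<le> 1"
proof -
  show "0 \<le> avote N E t q" using assms unfolding avote_def probv_def
    by (intro sum_nonneg) (simp add: indic_def less_imp_le)
  have "avote N E t q \<le> (\<Sum>i<N. q i)" unfolding avote_def
  proof (rule sum_mono)
    fix i assume "i \<in> {..<N}"
    then have "0 \<le> q i" using assms by (simp add: probv_def less_imp_le)
    then show "q i * indic (E t i) \<le> q i" using indic_bounds[of "E t i"] by (simp add: mult_left_le)
  qed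
  then show "avote N E t q \<le> 1" using assms by (simp add: probv_def)
qed

lemma p1_eq: "exp4_p1 \<eta> N E t q = (1-\<eta>) * avote N E t q + \<eta>"
  by (simp add: exp4_p1_def avote_def)

lemma p1_bounds:
  assumes "probv N q" "0 < \<eta>" "\<eta> < 1/2"
  shows "\<eta> \<le> exp4_p1 \<eta> N E t q" "exp4_p1 \<eta> N E t q \<le> 1"
proof -
  have a: "0 \<le> avote N E t q" "avote N E t q \<le> 1" using avote_bounds[OF assms(1)] by auto
  have "0 \<le> (1-\<eta>) * avote N E t q" using a assms by simp
  then show "\<eta> \<le> exp4_p1 \<eta> N E t q" by (simp add: p1_eq)
  have "(1-\<eta>) * avote N E t q \<le> (1-\<eta>) * 1" using a assms by (intro mult_left_mono) auto
  then show "exp4_p1 \<eta> N E t q \<le> 1" by (simp add: p1_eq)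
qed

lemma update_False:
  assumes "probv N q" shows "exp4_update \<eta> N E y t q False = q"
  using assms by (simp add: exp4_update_def exp4_lhat_def probv_def)

lemma update_Z:
  fixes \<eta> :: real and E :: "nat \<Rightarrow> nat \<Rightarrow> bool" and y :: "nat \<Rightarrow> bool" and t :: nat
  assumes "probv N q"
  defines "e \<equiv> (\<lambda>v. exp (- \<eta> * exp4_lhat \<eta> N E y t q True v))"
  shows "(\<Sum>j<N. q j * e (E t j)) = avote N E t q * e True + (1 - avote N E t q) * e False"
proof -
  have "\<And>j. q j * e (E t j) = q j * indic (E t j) * e True + (q j - q j * indic (E t j)) * e False"
    by (case_tac "E t j") simp_all
  then have "(\<Sum>j<N. q j * e (E t j)) = (\<Sum>j<N. q j * indic (E t j) * e True + (q j - q j * indic (E t j)) * e False)"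
    by simp
  also have "\<dots> = (\<Sum>j<N. q j * indic (E t j)) * e True + ((\<Sum>j<N. q j) - (\<Sum>j<N. q j * indic (E t j))) * e False"
    by (simp add: sum.distrib sum_distrib_right sum_subtractf left_diff_distrib)
  also have "\<dots> = avote N E t q * e True + (1 - avote N E t q) * e False"
    using assms(1) by (simp add: avote_def probv_def)
  finally show ?thesis .
qed

lemma update_probv:
  assumes "probv N q"
  shows "probv N (exp4_update \<eta> N E y t q yh)"
proof -
  define e where "e = (\<lambda>v. exp (- \<eta> * exp4_lhat \<eta> N E y t q yh v))"
  define Z where "Z = (\<Sum>j<N. q j * e (E t j))"
  have N: "N \<noteq> 0" using assms by (cases N) (auto simp: probv_def)
  have Zpos: "0 < Z" unfolding Z_def using assms N
    by (intro sum_pos) (auto simp: probv_def e_def)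
  have upd: "exp4_update \<eta> N E y t q yh = (\<lambda>i. q i * e (E t i) / Z)"
    by (simp add: exp4_update_def e_def Z_def)
  have "(\<Sum>i<N. q i * e (E t i) / Z) = Z / Z" unfolding Z_def by (rule sum_divide_distrib[symmetric])
  then show ?thesis using Zpos assms unfolding upd probv_def by (auto simp: e_def)
qed

lemma finite_run: "finite (set_pmf (exp4_run \<eta> N E y k t q))"
  by (induction k arbitrary: t q) auto

lemma E_shift:
  assumes "finite (set_pmf M)"
  shows "measure_pmf.expectation M (\<lambda>m. real (c + m)) = real c + measure_pmf.expectation M real"
  using assms by (simp add: integrable_measure_pmf_finite)

lemma E_shift':
  assumes "finite (set_pmf M)"
  shows "measure_pmf.expectation M (\<lambda>m. (c::real) + real m) = c + measure_pmf.expectation M real"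
  using assms by (subst Bochner_Integration.integral_add) (auto simp: integrable_measure_pmf_finite)

lemma E_step:
  assumes "0 \<le> exp4_p1 \<eta> N E t q" "exp4_p1 \<eta> N E t q \<le> 1"
  shows "measure_pmf.expectation (exp4_run \<eta> N E y (Suc k) t q) real =
     exp4_p1 \<eta> N E t q * (indic (True \<noteq> y t) + measure_pmf.expectation (exp4_run \<eta> N E y k (Suc t) (exp4_update \<eta> N E y t q True)) real)
   + (1 - exp4_p1 \<eta> N E t q) * (indic (False \<noteq> y t) + measure_pmf.expectation (exp4_run \<eta> N E y k (Suc t) (exp4_update \<eta> N E y t q False)) real)"
  apply (simp only: exp4_run.simps)
  apply (subst pmf_expectation_bind[where A=UNIV])
  using assms by (auto simp: UNIV_bool finite_run E_shift' indic_def)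

lemma main_bound:
  assumes eta: "0 < \<eta>" "\<eta> < 1/2" and j: "j < N"
  shows "probv N q \<Longrightarrow> measure_pmf.expectation (exp4_run \<eta> N E y k t q) real
    \<le> (\<Sum>s\<in>{t..<t+k}. indic (E s j \<noteq> y s)) - ln (q j) / \<eta> + 2 * \<eta> * real k"
proof (induction k arbitrary: t q)
  case 0
  have qpos: "0 < q j" using 0 j by (simp add: probv_def)
  have "q j \<le> (\<Sum>i<N. q i)" using 0 j
    by (intro member_le_sum) (auto simp: probv_def less_imp_le)
  then have "q j \<le> 1" using 0 by (simp add: probv_def)
  then have "ln (q j) \<le> 0" using qpos by simp
  then have "ln (q j) / \<eta> \<le> 0" using eta by (simp add: divide_nonpos_pos)
  then show ?case by simp
next
  case (Suc k)
  note pq = Suc.prems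
  define a where "a = avote N E t q"
  define p where "p = exp4_p1 \<eta> N E t q"
  have a01: "0 \<le> a" "a \<le> 1" using avote_bounds[OF pq] by (auto simp: a_def)
  have pa: "p = (1-\<eta>)*a + \<eta>" by (simp add: p_def a_def p1_eq)
  have pb: "\<eta> \<le> p" "p \<le> 1" using p1_bounds[OF pq eta] by (auto simp: p_def)
  have ppos: "0 < p" using pb eta by linarith
  define e where "e = (\<lambda>v. exp (- \<eta> * exp4_lhat \<eta> N E y t q True v))"
  define Z where "Z = (\<Sum>j<N. q j * e (E t j))"
  define qT where "qT = exp4_update \<eta> N E y t q True"
  have Zeq: "Z = a * e True + (1 - a) * e False"
    using update_Z[OF pq, of \<eta> E y t] by (simp add: Z_def e_def a_def)
  have ev: "\<And>v. e v = exp (- \<eta> * indic (v \<noteq> y t) / p)"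
    by (simp add: e_def exp4_lhat_def p_def)
  have N: "N \<noteq> 0" using pq by (cases N) (auto simp: probv_def)
  have Zpos: "0 < Z" unfolding Z_def using pq N
    by (intro sum_pos) (auto simp: probv_def e_def)
  have qpos: "0 < q j" using pq j by (simp add: probv_def)
  have qTj: "qT j = q j * e (E t j) / Z"
    by (simp add: qT_def exp4_update_def e_def Z_def)
  define c where "c = indic (E t j \<noteq> y t)"
  define L where "L = ln (q j)"
  define LZ where "LZ = ln Z"
  have lnT: "ln (qT j) = L - \<eta> * c / p - LZ"
    using qpos Zpos by (simp add: qTj ln_div ln_mult ev c_def L_def LZ_def)
  define cT where "cT = indic (True \<noteq> y t)"
  define cF where "cF = indic (False \<noteq> y t)"
  have key: "p * cT + (1-p) * cF + p * LZ / \<eta> \<le> 2 * \<eta>"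
  proof (cases "y t")
    case True
    have "Z = a + (1 - a) * exp (-\<eta>/p)" using True by (simp add: Zeq ev)
    then show ?thesis using roundT[OF eta a01 pa] True by (simp add: cT_def cF_def LZ_def)
  next
    case False
    have "Z = a * exp (-\<eta>/p) + (1 - a)" using False by (simp add: Zeq ev)
    then show ?thesis using roundF[OF eta a01 pa] False by (simp add: cT_def cF_def LZ_def)
  qed
  define S' where "S' = (\<Sum>s\<in>{Suc t..<Suc t+k}. indic (E s j \<noteq> y s))"
  have IHT: "measure_pmf.expectation (exp4_run \<eta> N E y k (Suc t) qT) real \<le> S' - ln (qT j) / \<eta> + 2 * \<eta> * real k"
    using Suc.IH[of qT "Suc t"] update_probv[OF pq] by (simp add: qT_def S'_def)
  have IHF: "measure_pmf.expectation (exp4_run \<eta> N E y k (Suc t) q) real \<le> S' - L / \<eta> + 2 * \<eta> * real k"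
    using Suc.IH[of q "Suc t"] pq by (simp add: L_def S'_def)
  have step: "measure_pmf.expectation (exp4_run \<eta> N E y (Suc k) t q) real =
     p * (cT + measure_pmf.expectation (exp4_run \<eta> N E y k (Suc t) qT) real)
   + (1 - p) * (cF + measure_pmf.expectation (exp4_run \<eta> N E y k (Suc t) q) real)"
    using E_step[of \<eta> N E t q y k] pb eta update_False[OF pq]
    by (simp add: p_def cT_def cF_def qT_def)
  have "measure_pmf.expectation (exp4_run \<eta> N E y (Suc k) t q) real \<le>
     p * (cT + (S' - ln (qT j) / \<eta> + 2 * \<eta> * real k))
   + (1 - p) * (cF + (S' - L / \<eta> + 2 * \<eta> * real k))"
    unfolding step using IHT IHF pb ppos
    by (intro add_mono mult_left_mono) auto
  also have "\<dots> = (p * cT + (1-p) * cF + p * LZ / \<eta>) + c + S' - L / \<eta> + 2 * \<eta> * real k"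
    unfolding lnT using ppos eta by (simp add: field_simps)
  also have "\<dots> \<le> 2 * \<eta> + c + S' - L / \<eta> + 2 * \<eta> * real k"
    using key by simp
  also have "\<dots> = (\<Sum>s\<in>{t..<t+Suc k}. indic (E s j \<noteq> y s)) - ln (q j) / \<eta> + 2 * \<eta> * real (Suc k)"
    by (simp add: S'_def c_def L_def sum.atLeast_Suc_lessThan algebra_simps)
  finally show ?case .
qed

theorem theorem3:
  fixes N T :: nat and \<eta> :: real
    and E :: "nat \<Rightarrow> nat \<Rightarrow> bool" and y :: "nat \<Rightarrow> bool"
  assumes "N \<ge> 1"
    and eta_def: "\<eta> = sqrt (ln (real N) / (2 * real T))"
    and "0 < \<eta>" and "\<eta> < 1/2"
  shows "measure_pmf.expectation (exp4_mistakes \<eta> N T E y) real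
         \<le> (INF j\<in>{..<N}. (\<Sum>t=1..T. indic (E t j \<noteq> y t)))
            + 3 * sqrt (real T * ln (real N))"
proof -
  have eta: "0 < \<eta>" "\<eta> < 1/2" using assms by auto
  have N1: "1 \<le> real N" using assms(1) by simp
  have lnN: "0 \<le> ln (real N)" using N1 by simp
  have "0 < ln (real N) / (2 * real T)" using assms(3) eta_def by simp
  then have Tpos: "0 < real T"
    by (cases T) auto
  have eta2: "\<eta>^2 = ln (real N) / (2 * real T)"
    unfolding eta_def using lnN Tpos by simp
  then have lnN_eq: "ln (real N) = 2 * real T * \<eta>^2" using Tpos by (simp add: field_simps)
  have bound: "ln (real N) / \<eta> + 2 * \<eta> * real T \<le> 3 * sqrt (real T * ln (real N))"
  proof -
    have "ln (real N) / \<eta> + 2 * \<eta> * real T = 4 * real T * \<eta>"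
      using eta by (simp add: lnN_eq power2_eq_square field_simps)
    also have "\<dots> \<le> sqrt (9 * (real T * ln (real N)))"
    proof (rule real_le_rsqrt)
      have "(4 * real T * \<eta>)^2 = 16 * real T^2 * \<eta>^2" by (simp add: power_mult_distrib)
      also have "\<dots> = 8 * (real T * ln (real N))" by (simp add: lnN_eq power2_eq_square)
      also have "\<dots> \<le> 9 * (real T * ln (real N))" using Tpos lnN by simp
      finally show "(4 * real T * \<eta>)^2 \<le> 9 * (real T * ln (real N))" .
    qed
    also have "\<dots> = 3 * sqrt (real T * ln (real N))" by (simp add: real_sqrt_mult)
    finally show ?thesis .
  qed
  define q0 where "q0 = (\<lambda>i::nat. 1 / real N)"
  have pq0: "probv N q0" using assms(1) by (simp add: probv_def q0_def)
  have each: "measure_pmf.expectation (exp4_mistakes \<eta> N T E y) real - 3 * sqrt (real T * ln (real N))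
      \<le> (\<Sum>t=1..T. indic (E t j \<noteq> y t))" if j: "j < N" for j
  proof -
    have "measure_pmf.expectation (exp4_mistakes \<eta> N T E y) real
      \<le> (\<Sum>s\<in>{1..<1+T}. indic (E s j \<noteq> y s)) - ln (q0 j) / \<eta> + 2 * \<eta> * real T"
      using main_bound[OF eta j pq0, of E y T 1] by (simp add: exp4_mistakes_def q0_def)
    moreover have "ln (q0 j) / \<eta> = - (ln (real N) / \<eta>)" using N1 by (simp add: q0_def ln_div)
    moreover have "(\<Sum>s\<in>{1..<1+T}. indic (E s j \<noteq> y s)) = (\<Sum>s\<in>{1..T}. indic (E s j \<noteq> y s))"
      by (rule sum.cong) auto
    ultimately have "measure_pmf.expectation (exp4_mistakes \<eta> N T E y) real
      \<le> (\<Sum>s\<in>{1..T}. indic (E s j \<noteq> y s)) + ln (real N) / \<eta> + 2 * \<eta> * real T"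
      by linarith
    then show ?thesis using bound by linarith
  qed
  have "measure_pmf.expectation (exp4_mistakes \<eta> N T E y) real - 3 * sqrt (real T * ln (real N))
      \<le> (INF j\<in>{..<N}. (\<Sum>t=1..T. indic (E t j \<noteq> y t)))"
  proof (rule cINF_greatest)
    have "0 \<in> {..<N}" using assms(1) by simp
    then show "{..<N} \<noteq> {}" by blast
  qed (use each in auto)
  then show ?thesis by simp
qed

end
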